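(* Let $p$ be an odd prime, let $m,k$ be integers with $0<k\le\lfloor m/2\rfloor$ and $m/\gcd(m,k)$ odd, and put $l=\gcd(m,k)$. Let $\alpha\in\mathbb{F}_{p^l}$ be a non-square in $\mathbb{F}_{p^m}$, and let $\sigma(x)=x^{p^s}$ with $0\le s\le\lfloor m/2\rfloor$. With $x\circ_k y=x^{p^k}y+y^{p^k}x$, define on $\mathbb{F}_{p^m}^2$ the multiplication $(a,b)*(c,d)=(a\circ_k c+\alpha\,\sigma(b\circ_k d),\ ad+bc)$, let $L(a,b)=(a+a^{p^k},b)$, and let $\mathbb{S}_{k,\sigma}=(\mathbb{F}_{p^m}^2,+,\star)$ be the semifield with $L(x)\star L(y)=x*y$. Then the nucleus $N(\mathbb{S}_{k,\sigma})$ (which equals its left and its right nucleus) is isomorphic to $\mathbb{F}_{p^t}$, where $t=\gcd(m,k,s)$ (with $\gcd(m,k,0)=\gcd(m,k)$).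
   Context: For a semifield $(\mathbb{S},+,\star)$: left nucleus $N_l=\{a:(a\star x)\star y=a\star(x\star y)\ \forall x,y\}$, middle nucleus $N_m=\{a:(x\star a)\star y=x\star(a\star y)\ \forall x,y\}$, right nucleus $N_r=\{a:(x\star y)\star a=x\star(y\star a)\ \forall x,y\}$, and nucleus $N=N_l\cap N_m\cap N_r$. These are finite fields; for commutative $\mathbb{S}$, $N_l=N_r=N$. *)

theory Defs
  imports Main "HOL-Computational_Algebra.Primes"
begin

text \<open>The finite field F_{p^m} is modelled by a finite field type 'a with CARD('a) = p^m.
  Elements of the semifield are pairs in 'a \<times> 'a with componentwise addition.\<close>

definition circ :: "nat \<Rightarrow> nat \<Rightarrow> 'a::field \<Rightarrow> 'a \<Rightarrow> 'a" where
  "circ p k x y = x ^ (p ^ k) * y + y ^ (p ^ k) * x"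

definition pre_mult :: "nat \<Rightarrow> nat \<Rightarrow> nat \<Rightarrow> 'a::field \<Rightarrow> 'a \<times> 'a \<Rightarrow> 'a \<times> 'a \<Rightarrow> 'a \<times> 'a" where
  "pre_mult p k s \<alpha> u v =
     (circ p k (fst u) (fst v) + \<alpha> * (circ p k (snd u) (snd v)) ^ (p ^ s),
      fst u * snd v + snd u * fst v)"

definition Lmap :: "nat \<Rightarrow> nat \<Rightarrow> 'a::field \<times> 'a \<Rightarrow> 'a \<times> 'a" where
  "Lmap p k u = (fst u + fst u ^ (p ^ k), snd u)"

definition star :: "nat \<Rightarrow> nat \<Rightarrow> nat \<Rightarrow> 'a::field \<Rightarrow> 'a \<times> 'a \<Rightarrow> 'a \<times> 'a \<Rightarrow> 'a \<times> 'a" where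
  "star p k s \<alpha> u v = pre_mult p k s \<alpha> (inv (Lmap p k) u) (inv (Lmap p k) v)"

definition pair_add :: "'a::field \<times> 'a \<Rightarrow> 'a \<times> 'a \<Rightarrow> 'a \<times> 'a" where
  "pair_add u v = (fst u + fst v, snd u + snd v)"

definition left_nucleus :: "('b \<Rightarrow> 'b \<Rightarrow> 'b) \<Rightarrow> 'b set" where
  "left_nucleus m = {a. \<forall>x y. m (m a x) y = m a (m x y)}"

definition middle_nucleus :: "('b \<Rightarrow> 'b \<Rightarrow> 'b) \<Rightarrow> 'b set" where
  "middle_nucleus m = {a. \<forall>x y. m (m x a) y = m x (m a y)}"

definition right_nucleus :: "('b \<Rightarrow> 'b \<Rightarrow> 'b) \<Rightarrow> 'b set" where
  "right_nucleus m = {a. \<forall>x y. m (m x y) a = m x (m y a)}"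

definition nucleus :: "('b \<Rightarrow> 'b \<Rightarrow> 'b) \<Rightarrow> 'b set" where
  "nucleus m = left_nucleus m \<inter> middle_nucleus m \<inter> right_nucleus m"

end

theory Submission
  imports Defs "HOL-Number_Theory.Residues" "HOL-Computational_Algebra.Polynomial"
begin


lemma char_eq:
  fixes p m :: nat
  assumes "prime p" "card (UNIV :: 'a::{field,finite} set) = p ^ m"
  shows "CHAR('a) = p"
proof -
  have "CHAR('a) > 0" by (rule finite_imp_CHAR_pos) simp
  hence pr: "prime CHAR('a)" by (rule prime_CHAR_semidom)
  have "CHAR('a) dvd p ^ m" using CHAR_dvd_CARD[where 'a='a] assms(2) by simp
  hence "CHAR('a) dvd p" using pr prime_dvd_power by blast
  thus ?thesis using pr assms(1) by (simp add: primes_dvd_imp_eq)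
qed

lemma frob_add:
  fixes x y :: "'a::{field,finite}"
  assumes "CHAR('a) = p" "prime p"
  shows "(x + y) ^ (p ^ j) = x ^ (p ^ j) + y ^ (p ^ j)"
  using freshmans_dream'[where 'a='a] assms by simp

lemma frob_neg:
  fixes x :: "'a::{field,finite}"
  assumes "odd p"
  shows "(- x) ^ (p ^ j) = - (x ^ (p ^ j))"
  using assms by simp

lemma frob_sub:
  fixes x y :: "'a::{field,finite}"
  assumes "CHAR('a) = p" "prime p" "odd p"
  shows "(x - y) ^ (p ^ j) = x ^ (p ^ j) - y ^ (p ^ j)"
  using frob_add[OF assms(1,2), of x "-y" j] frob_neg[OF assms(3), of y j] by simp

lemma fermat_field:
  fixes x :: "'a::{field,finite}"
  shows "x ^ card (UNIV :: 'a set) = x"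
proof (cases "x = 0")
  case False
  have "x * (\<Prod>y\<in>UNIV-{0}. x * y) = x * x ^ (card (UNIV :: 'a set) - 1) * \<Prod>(UNIV-{0})"
    by (simp add: prod.distrib mult_ac)
  also have "x * x ^ (card (UNIV :: 'a set) - 1) = x ^ Suc (card (UNIV :: 'a set) - 1)"
    by (subst power_Suc) auto
  also have "Suc (card (UNIV :: 'a set) - 1) = card (UNIV :: 'a set)"
    using finite_UNIV_card_ge_0[where ?'a = 'a] by simp
  also have "(\<Prod>y\<in>UNIV-{0}. x * y) = (\<Prod>y\<in>UNIV-{0}. y)"
    by (rule prod.reindex_bij_witness[of _ "\<lambda>y. y / x" "\<lambda>y. x * y"]) (use False in auto)
  finally show ?thesis
    by simp
qed (use finite_UNIV_card_ge_0[where ?'a = 'a] in auto)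

lemma fix_mult:
  fixes x :: "'a::field"
  assumes "x ^ (p ^ t) = x"
  shows "x ^ (p ^ (t * j)) = x"
proof (induction j)
  case (Suc j)
  have "x ^ (p ^ (t * Suc j)) = (x ^ (p ^ t)) ^ (p ^ (t * j))"
    by (simp add: power_add power_mult)
  thus ?case using assms Suc by simp
qed simp

lemma fix_dvd:
  fixes x :: "'a::field"
  assumes "x ^ (p ^ t) = x" "t dvd n"
  shows "x ^ (p ^ n) = x"
  using assms fix_mult by (metis dvdE)

lemma fix_sub:
  fixes x :: "'a::field"
  assumes "x ^ (p ^ (j + r)) = x" "x ^ (p ^ j) = x"
  shows "x ^ (p ^ r) = x"
proof -
  have "x ^ (p ^ (j + r)) = (x ^ (p ^ j)) ^ (p ^ r)"
    by (simp add: power_add power_mult)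
  thus ?thesis using assms by simp
qed

lemma fix_gcd:
  fixes x :: "'a::field"
  shows "x ^ (p ^ i) = x \<Longrightarrow> x ^ (p ^ j) = x \<Longrightarrow> x ^ (p ^ gcd i j) = x"
proof (induction i j rule: gcd_nat_induct)
  case (base m)
  then show ?case by simp
next
  case (step m n)
  have "m = n * (m div n) + m mod n" by simp
  have a: "x ^ (p ^ (n * (m div n))) = x" using fix_mult step by blast
  have "x ^ (p ^ (m mod n)) = x"
    using fix_sub[of x p "n * (m div n)" "m mod n"] a step(3)
    by (metis div_mult_mod_eq mult.commute)
  then show ?case using step by (simp add: gcd_non_0_nat)
qed


lemma gcd2:
  fixes m k :: nat
  assumes "odd (m div gcd m k)" "0 < k"
  shows "gcd (2 * k) m = gcd m k"
proof -
  obtain l where ldef: "gcd m k = l" by blast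
  have lp: "l > 0" using assms ldef by auto
  obtain m' k' where mk: "m = l * m'" "k = l * k'" using ldef by (metis gcd_dvd1 gcd_dvd2 dvdE)
  have "l * gcd m' k' = gcd m k" unfolding mk by (simp add: gcd_mult_distrib_nat)
  hence "l * gcd m' k' = l * 1" using ldef by simp
  hence cop: "gcd m' k' = 1" using lp by (metis mult_left_cancel not_gr0)
  have "m div l = m'" using mk lp by simp
  hence "odd m'" using assms(1) ldef by simp
  hence "coprime 2 m'" by simp
  moreover have "coprime k' m'" using cop by (simp add: coprime_iff_gcd_eq_1 gcd.commute)
  ultimately have "coprime (2 * k') m'" by simp
  hence g1: "gcd (2 * k') m' = 1" by simp
  have "gcd (2 * k) m = gcd (l * (2 * k')) (l * m')" using mk by (simp add: ac_simps)
  also have "\<dots> = l * gcd (2 * k') m'" by (simp add: gcd_mult_distrib_nat)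
  finally show ?thesis using g1 ldef by simp
qed

lemma nonfix:
  fixes p m k :: nat
  assumes "prime p" "card (UNIV :: 'a::{field,finite} set) = p ^ m" "0 < k" "k < m"
  shows "\<exists>z::'a. z ^ (p ^ k) \<noteq> z"
proof (rule ccontr)
  assume "\<not> ?thesis"
  hence all: "\<And>z::'a. z ^ (p ^ k) = z" by blast
  define P :: "'a poly" where "P = monom 1 (p ^ k) - [:0, 1:]"
  have p1: "p > 1" using assms(1) prime_gt_1_nat by blast
  have pk: "p ^ k > 1" by (rule one_less_power[OF p1 assms(3)])
  have "coeff P (p ^ k) = 1" using pk by (simp add: P_def coeff_monom coeff_eq_0)
  hence "P \<noteq> 0" by auto
  hence "card {x. poly P x = 0} \<le> degree P" by (rule card_poly_roots_bound)
  moreover have "{x. poly P x = 0} = UNIV" using all by (auto simp: P_def poly_monom)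
  moreover have "degree P \<le> p ^ k"
  proof -
    have "degree P \<le> max (degree (monom (1::'a) (p ^ k))) (degree [:0, 1::'a:])"
      unfolding P_def by (rule degree_diff_le_max)
    thus ?thesis using pk by (simp add: degree_monom_eq)
  qed
  moreover have "p ^ k < p ^ m" using p1 assms(4) by (simp add: power_strict_increasing)
  ultimately show False using assms(2) by simp
qed

lemma circ_comm: "circ p k x y = circ p k y x"
  by (simp add: circ_def add.commute)

lemma pm_comm: "pre_mult p k s \<alpha> u v = pre_mult p k s \<alpha> v u"
  by (simp add: pre_mult_def circ_comm add.commute mult.commute)

lemma right_eq_left:
  assumes "\<And>x y. f x y = f y x"
  shows "right_nucleus f = left_nucleus f"
proof -
  have "(\<forall>x y. f (f x y) a = f x (f y a)) \<longleftrightarrow> (\<forall>x y. f (f a x) y = f a (f x y))" for a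
  proof -
    have "f (f x y) a = f x (f y a) \<longleftrightarrow> f (f a y) x = f a (f y x)" for x y
      by (metis assms)
    thus ?thesis by metis
  qed
  thus ?thesis unfolding right_nucleus_def left_nucleus_def by blast
qed

lemma circ_scale:
  fixes c :: "'a::field"
  assumes "c ^ (p ^ k) = c"
  shows "circ p k (c * a) b = c * circ p k a b"
  using assms by (simp add: circ_def power_mult_distrib algebra_simps)

lemma pm_scale:
  fixes c :: "'a::field"
  assumes "c ^ (p ^ k) = c" "c ^ (p ^ s) = c"
  shows "pre_mult p k s \<alpha> (c * fst u, c * snd u) v
       = (c * fst (pre_mult p k s \<alpha> u v), c * snd (pre_mult p k s \<alpha> u v))"
  using assms by (simp add: pre_mult_def circ_scale power_mult_distrib algebra_simps)

lemma pm_c0: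
  fixes c :: "'a::field"
  assumes "c ^ (p ^ k) = c" "p > 0"
  shows "pre_mult p k s \<alpha> (c, 0) v = Lmap p k (c * fst v, c * snd v)"
  using assms by (simp add: pre_mult_def Lmap_def circ_def power_mult_distrib algebra_simps)

lemma L_scale:
  fixes c :: "'a::field"
  assumes "c ^ (p ^ k) = c"
  shows "Lmap p k (c * fst u, c * snd u) = (c * fst (Lmap p k u), c * snd (Lmap p k u))"
  using assms by (simp add: Lmap_def power_mult_distrib algebra_simps)

theorem theorem3:
  fixes p m k s :: nat and \<alpha> :: "'a::{field,finite}"
  assumes "prime p" and "odd p"
    and "card (UNIV :: 'a set) = p ^ m"
    and "0 < k" and "k \<le> m div 2"
    and "odd (m div gcd m k)"
    and "\<alpha> ^ (p ^ gcd m k) = \<alpha>"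
    and "\<not> (\<exists>y. y ^ 2 = \<alpha>)"
    and "s \<le> m div 2"
  shows "left_nucleus (star p k s \<alpha>) = nucleus (star p k s \<alpha>)
       \<and> right_nucleus (star p k s \<alpha>) = nucleus (star p k s \<alpha>)
       \<and> (\<exists>f. bij_betw f (nucleus (star p k s \<alpha>)) {x::'a. x ^ (p ^ gcd (gcd m k) s) = x}
              \<and> (\<forall>a\<in>nucleus (star p k s \<alpha>). \<forall>b\<in>nucleus (star p k s \<alpha>).
                    f (pair_add a b) = f a + f b
                  \<and> f (star p k s \<alpha> a b) = f a * f b))"
proof -
  have p0: "p > 0" using prime_gt_0_nat assms(1) by blast
  have z0 [simp]: "\<And>j. (0::'a) ^ (p ^ j) = 0" using p0 by simp
  have ch: "CHAR('a) = p" using char_eq assms(1,3) by blast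
  have two: "(2::'a) \<noteq> 0"
  proof
    assume "(2::'a) = 0"
    hence "of_nat 2 = (0::'a)" by simp
    hence "p dvd 2" using of_nat_eq_0_iff_char_dvd ch by metis
    hence "p \<le> 2" by (simp add: dvd_imp_le)
    moreover have "p \<ge> 2" using prime_ge_2_nat assms(1) by blast
    ultimately show False using assms(2) by simp
  qed
  have al0: "\<alpha> \<noteq> 0" using assms(8) by (metis power_zero_numeral)
  have ferm: "\<And>x::'a. x ^ (p ^ m) = x" using fermat_field assms(3) by metis
  have km: "k < m" using assms(4,5) by linarith
  obtain z :: 'a where z: "z ^ (p ^ k) \<noteq> z" using nonfix assms(1,3,4) km by blast
  have kern: "x = 0" if h: "x + x ^ (p ^ k) = 0" for x :: 'a
  proof -
    have e1: "x ^ (p ^ k) = - x" using h by (simp add: eq_neg_iff_add_eq_0 add.commute)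
    have "x ^ (p ^ (k + k)) = (x ^ (p ^ k)) ^ (p ^ k)" by (simp add: power_add power_mult)
    also have "\<dots> = x" using e1 assms(2) by simp
    finally have "x ^ (p ^ (2 * k)) = x" by (metis mult_2)
    hence "x ^ (p ^ gcd (2*k) m) = x" using fix_gcd[OF _ ferm] by simp
    hence "x ^ (p ^ gcd m k) = x" using gcd2 assms(6,4) by simp
    hence "x ^ (p ^ k) = x" by (rule fix_dvd) simp
    hence "x + x = 0" using h by simp
    hence "2 * x = 0" by (metis mult_2)
    thus "x = 0" using two by simp
  qed
  define L where "L = (Lmap p k :: 'a \<times> 'a \<Rightarrow> 'a \<times> 'a)"
  define Li where "Li = inv_into UNIV L"
  define pm where "pm = (pre_mult p k s \<alpha> :: 'a \<times> 'a \<Rightarrow> 'a \<times> 'a \<Rightarrow> 'a \<times> 'a)"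
  define st where "st = (star p k s \<alpha> :: 'a \<times> 'a \<Rightarrow> 'a \<times> 'a \<Rightarrow> 'a \<times> 'a)"
  have inj: "inj L"
  proof (rule injI)
    fix u v :: "'a \<times> 'a" assume "L u = L v"
    hence e: "fst u + fst u ^ (p^k) = fst v + fst v ^ (p^k)" "snd u = snd v"
      by (simp_all add: L_def Lmap_def)
    have fs: "(fst u - fst v) ^ (p^k) = fst u ^ (p^k) - fst v ^ (p^k)"
      by (rule frob_sub[OF ch assms(1,2)])
    have "(fst u - fst v) + (fst u - fst v) ^ (p^k) = (fst u + fst u ^ (p^k)) - (fst v + fst v ^ (p^k))"
      unfolding fs by (simp add: algebra_simps)
    hence "(fst u - fst v) + (fst u - fst v) ^ (p^k) = 0" using e(1) by simp
    hence "fst u - fst v = 0" by (rule kern)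
    thus "u = v" using e(2) by (simp add: prod_eq_iff)
  qed
  have surj: "surj L" by (rule finite_UNIV_inj_surj[OF _ inj]) simp
  have LiL: "\<And>u. Li (L u) = u" using inj by (simp add: Li_def)
  have LLi: "\<And>u. L (Li u) = u" using surj by (simp add: Li_def surj_f_inv_f)
  have st_eq: "\<And>a b. st a b = pm (Li a) (Li b)" by (simp add: st_def star_def pm_def Li_def L_def)
  have pmc: "\<And>a b. pm a b = pm b a" unfolding pm_def by (rule pm_comm)
  have comm: "\<And>a b. st a b = st b a" unfolding st_eq by (rule pmc)
  define K where "K = {c::'a. c ^ (p ^ gcd (gcd m k) s) = c}"
  define S where "S = {(2 * c, 0::'a) | c::'a. c \<in> K}"
  have tk: "gcd (gcd m k) s dvd k" by (meson dvd_trans gcd_dvd1 gcd_dvd2)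
  have ts: "gcd (gcd m k) s dvd s" by simp
  have Kk: "c ^ (p^k) = c" if "c \<in> K" for c
    by (rule fix_dvd[OF _ tk]) (use that K_def in simp)
  have Ks: "c ^ (p^s) = c" if "c \<in> K" for c
    by (rule fix_dvd[OF _ ts]) (use that K_def in simp)
  have dbl: "\<And>x::'a. x + x = 2 * x" by (rule mult_2[symmetric])
  have Li_c: "Li (2*c, 0) = (c,0)" if "c^(p^k) = c" for c
  proof -
    have "L (c,0) = (c + c, 0)" using that by (simp add: L_def Lmap_def)
    also have "\<dots> = (2*c,0)" by (simp only: dbl)
    finally show ?thesis using LiL[of "(c,0)"] by simp
  qed
  have SLM: "a \<in> left_nucleus st \<and> a \<in> middle_nucleus st" if aS: "a \<in> S" for a
  proof -
    obtain c where a: "a = (2*c, 0)" and cK: "c \<in> K" using aS S_def by blast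
    have ck: "c^(p^k) = c" using Kk cK by blast
    have cs: "c^(p^s) = c" using Ks cK by blast
    have Lia: "Li a = (c, 0)" using a Li_c ck by blast
    have sc1: "Li (pm (c,0) X) = (c * fst X, c * snd X)" for X
    proof -
      have "pm (c,0) X = L (c * fst X, c * snd X)" unfolding pm_def L_def by (rule pm_c0[OF ck p0])
      thus ?thesis using LiL[of "(c * fst X, c * snd X)"] by simp
    qed
    have sc2: "\<And>X Y. pm (c * fst X, c * snd X) Y = (c * fst (pm X Y), c * snd (pm X Y))"
      using pm_scale[OF ck cs] unfolding pm_def by blast
    have sc3: "\<And>Z. pm (c,0) (Li Z) = (c * fst Z, c * snd Z)"
    proof -
      fix Z
      have "pm (c,0) (Li Z) = L (c * fst (Li Z), c * snd (Li Z))"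
        using pm_c0[OF ck p0] unfolding pm_def L_def by blast
      also have "\<dots> = (c * fst (L (Li Z)), c * snd (L (Li Z)))"
        using L_scale[OF ck] unfolding L_def by blast
      finally show "pm (c,0) (Li Z) = (c * fst Z, c * snd Z)" using LLi by simp
    qed
    have sc4: "Li (c * fst Z, c * snd Z) = (c * fst (Li Z), c * snd (Li Z))" for Z
    proof -
      have "L (c * fst (Li Z), c * snd (Li Z)) = (c * fst (L (Li Z)), c * snd (L (Li Z)))"
        using L_scale[OF ck] unfolding L_def by blast
      hence "L (c * fst (Li Z), c * snd (Li Z)) = (c * fst Z, c * snd Z)" using LLi by simp
      thus ?thesis using LiL[of "(c * fst (Li Z), c * snd (Li Z))"] by simp
    qed
    have "st (st a x) y = st a (st x y)" for x y
      by (simp add: st_eq Lia sc2 sc3 sc4)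
    moreover have "st (st x a) y = st x (st a y)" for x y
    proof -
      have "st (st x a) y = st (st a x) y" using comm by simp
      also have "\<dots> = (c * fst (pm (Li x) (Li y)), c * snd (pm (Li x) (Li y)))"
        by (simp add: st_eq Lia sc2 sc3 sc4)
      also have "\<dots> = (c * fst (pm (Li y) (Li x)), c * snd (pm (Li y) (Li x)))"
        using pmc by simp
      also have "\<dots> = pm (Li (st a y)) (Li x)"
        by (simp add: st_eq Lia sc2 sc3 sc4)
      also have "\<dots> = st x (st a y)" using st_eq pmc by simp
      finally show ?thesis .
    qed
    ultimately show ?thesis unfolding left_nucleus_def middle_nucleus_def by blast
  qed
  have LS: "a \<in> S" if a: "a \<in> left_nucleus st" for a
  proof -
    have H: "pm (Li (pm (Li a) X)) Y = pm (Li a) (Li (pm X Y))" for X Y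
    proof -
      have "st (st a (L X)) (L Y) = st a (st (L X) (L Y))" using a unfolding left_nucleus_def by blast
      thus ?thesis by (simp add: st_eq LiL)
    qed
    obtain a1 a2 where A: "Li a = (a1, a2)" by (cases "Li a")
    define U where "U = Li (pm (a1,a2) (z,0))"
    have pmA: "pm (a1,a2) (z,0) = (circ p k a1 z, a2 * z)"
      by (simp add: pm_def pre_mult_def circ_def p0)
    have LU: "L U = (circ p k a1 z, a2 * z)" using LLi U_def pmA by simp
    have U1: "fst U + fst U^(p^k) = circ p k a1 z" and U2: "snd U = a2 * z"
      using LU by (simp_all add: L_def Lmap_def)
    have "Li (0,z) = (0,z)"
    proof -
      have "L (0,z) = (0,z)" by (simp add: L_def Lmap_def p0)
      thus ?thesis using LiL[of "(0,z)"] by simp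
    qed
    moreover have "pm (z,0) (0,1) = (0, z)" by (simp add: pm_def pre_mult_def circ_def p0)
    ultimately have "pm U (0,1) = pm (a1,a2) (0,z)" using H[of "(z,0)" "(0,1)"] A U_def by simp
    hence "fst U = a1 * z" by (simp add: pm_def pre_mult_def)
    hence "a1*z + (a1*z)^(p^k) = a1^(p^k)*z + z^(p^k)*a1" using U1 by (simp add: circ_def)
    hence "(a1 - a1^(p^k)) * (z - z^(p^k)) = 0" by (simp add: power_mult_distrib algebra_simps)
    hence a1k: "a1^(p^k) = a1" using z by simp
    have a20: "a2 = 0"
    proof (rule ccontr)
      assume a2: "a2 \<noteq> 0"
      define W where "W = Li (circ p k z z, 0)"
      have LW: "L W = (circ p k z z, 0)" using LLi W_def by simp
      have W1: "fst W + fst W^(p^k) = circ p k z z" and W2: "snd W = 0"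
        using LW by (simp_all add: L_def Lmap_def)
      have "pm (z,0) (z,0) = (circ p k z z, 0)" by (simp add: pm_def pre_mult_def circ_def p0)
      hence "pm U (z,0) = pm (a1,a2) W" using H[of "(z,0)" "(z,0)"] A U_def W_def by simp
      hence "snd U * z = a2 * fst W" using W2 by (simp add: pm_def pre_mult_def)
      hence "a2 * (z * z) = a2 * fst W" using U2 by (simp add: mult.assoc)
      hence "fst W = z * z" using a2 by simp
      hence "z*z + (z*z)^(p^k) = z^(p^k)*z + z^(p^k)*z" using W1 by (simp add: circ_def)
      hence "(z - z^(p^k)) * (z - z^(p^k)) = 0" by (simp add: power_mult_distrib algebra_simps)
      thus False using z by simp
    qed
    have a1s: "a1^(p^s) = a1"
    proof -
      define W where "W = Li (\<alpha> * 2^(p^s), 0)"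
      have LW: "L W = (\<alpha> * 2^(p^s), 0)" using LLi W_def by simp
      have W1: "fst W + fst W^(p^k) = \<alpha> * 2^(p^s)" and W2: "snd W = 0"
        using LW by (simp_all add: L_def Lmap_def)
      have e1: "pm (a1,0) (0,1) = (0, a1)" by (simp add: pm_def pre_mult_def circ_def p0)
      have "L (0,a1) = (0,a1)" by (simp add: L_def Lmap_def p0)
      hence e2: "Li (0,a1) = (0,a1)" using LiL[of "(0,a1)"] by simp
      have e3': "pm (0,a1) (0,1) = (\<alpha> * (a1 + a1)^(p^s), 0)"
        using a1k by (simp add: pm_def pre_mult_def circ_def p0)
      have e3: "pm (0,a1) (0,1) = (\<alpha> * (2*a1)^(p^s), 0)"
        using e3' by (simp only: dbl)
      have e4': "pm (0,1) (0,1) = (\<alpha> * (1 + 1)^(p^s), 0)"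
        by (simp add: pm_def pre_mult_def circ_def p0)
      have e4: "pm (0,1) (0,1) = (\<alpha> * 2^(p^s), 0)"
        using e4' by (simp only: one_add_one)
      have "pm (0,a1) (0,1) = pm (a1,0) W" using H[of "(0,1)" "(0,1)"] A a20 e1 e2 e4 W_def by simp
      hence "\<alpha> * (2*a1)^(p^s) = circ p k a1 (fst W)" using e3 W2
        by (simp add: pm_def pre_mult_def circ_def p0)
      also have "\<dots> = a1 * (fst W + fst W^(p^k))" using a1k by (simp add: circ_def algebra_simps)
      also have "\<dots> = a1 * (\<alpha> * 2^(p^s))" using W1 by simp
      finally have "(\<alpha> * 2^(p^s)) * (a1^(p^s) - a1) = 0"
        by (simp add: power_mult_distrib algebra_simps)
      thus ?thesis using al0 two by simp
    qed
    have "a = L (a1, 0)" using LLi[of a] A a20 by simp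
    hence "a = (a1 + a1, 0)" using a1k by (simp add: L_def Lmap_def)
    hence aeq: "a = (2 * a1, 0)" by (simp only: dbl)
    have "a1 ^ (p ^ gcd m k) = a1" by (rule fix_gcd[OF ferm a1k])
    hence "a1 \<in> K" unfolding K_def using fix_gcd[OF _ a1s] by simp
    thus ?thesis using aeq S_def by blast
  qed
  have left: "left_nucleus st = S" using SLM LS by blast
  have right: "right_nucleus st = S" using right_eq_left[of st, OF comm] left by simp
  have nuc: "nucleus st = S" using left right SLM unfolding nucleus_def by blast
  define f where "f = (\<lambda>u::'a \<times> 'a. fst u / 2)"
  have bij: "bij_betw f S K"
  proof (rule bij_betw_imageI)
    show "inj_on f S" unfolding inj_on_def S_def f_def using two by auto
    show "f ` S = K"
    proof
      show "f ` S \<subseteq> K" unfolding S_def f_def using two by auto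
      show "K \<subseteq> f ` S"
      proof
        fix c assume "c \<in> K"
        hence "(2*c, 0) \<in> S" unfolding S_def by blast
        moreover have "f (2*c, 0) = c" using two by (simp add: f_def)
        ultimately show "c \<in> f ` S" by (metis image_eqI)
      qed
    qed
  qed
  have hom: "f (pair_add a b) = f a + f b \<and> f (st a b) = f a * f b" if aS: "a \<in> S" and bS: "b \<in> S" for a b
  proof -
    obtain c where a: "a = (2*c, 0)" and cK: "c \<in> K" using aS S_def by blast
    obtain d where b: "b = (2*d, 0)" and dK: "d \<in> K" using bS S_def by blast
    have ck: "c^(p^k) = c" using Kk cK by blast
    have dk: "d^(p^k) = d" using Kk dK by blast
    have "st a b = pm (c,0) (d,0)" using st_eq a b Li_c ck dk by simp
    also have "\<dots> = (c * d + c * d, 0)" using ck dk by (simp add: pm_def pre_mult_def circ_def p0 mult.commute)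
    also have "\<dots> = (2 * (c * d), 0)" by (simp only: dbl)
    finally have "f (st a b) = c * d" using two by (simp add: f_def)
    moreover have "f (pair_add a b) = c + d" using two a b by (simp add: f_def pair_add_def algebra_simps)
    ultimately show ?thesis using two a b by (simp add: f_def)
  qed
  have "left_nucleus st = nucleus st \<and> right_nucleus st = nucleus st
       \<and> (\<exists>f. bij_betw f (nucleus st) K
              \<and> (\<forall>a\<in>nucleus st. \<forall>b\<in>nucleus st.
                    f (pair_add a b) = f a + f b \<and> f (st a b) = f a * f b))"
  proof (intro conjI exI[of _ f])
    show "left_nucleus st = nucleus st" using left nuc by simp
    show "right_nucleus st = nucleus st" using right nuc by simp
    show "bij_betw f (nucleus st) K" using bij nuc by simp
    show "\<forall>a\<in>nucleus st. \<forall>b\<in>nucleus st. f (pair_add a b) = f a + f b \<and> f (st a b) = f a * f b"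
      using hom nuc by simp
  qed
  thus ?thesis unfolding st_def K_def .
qed

end
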